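(* Let $n\in\mathbb{N}$ and let $A:\mathbb{R}[x_1,\dots,x_n]\to\mathbb{R}[x_1,\dots,x_n]$ be a linear map belonging to $\mathfrak{g}$. Then $A$ has a complex eigenvalue, i.e., there exist $\lambda\in\mathbb{C}$ and a nonzero polynomial $p\in\mathbb{C}[x_1,\dots,x_n]$ such that $A p=\lambda p$, where $A$ is extended $\mathbb{C}$-linearly to $\mathbb{C}[x_1,\dots,x_n]$.
   Context: Topology on polynomials: a sequence $(p_i)_{i\in\mathbb{N}_0}$ in $\mathbb{R}[x_1,\dots,x_n]$ converges to $p$ if and only if $\sup_i \deg p_i<\infty$ and for every $\alpha\in\mathbb{N}_0^n$ the $x^\alpha$-coefficient of $p_i$ converges to the $x^\alpha$-coefficient of $p$. For a linear map $A$ on $\mathbb{R}[x_1,\dots,x_n]$ and $t\in\mathbb{R}$, the map $e^{tA}$ is called well-defined if for every polynomial $f$ the partial sums $\sum_{k=0}^{N}\frac{t^k}{k!}A^k f$ converge (as $N\to\infty$) in this sense to a polynomial, which is then $e^{tA}f$. Define $\mathfrak{g}$ as the set of all linear maps $A:\mathbb{R}[x_1,\dots,x_n]\to\mathbb{R}[x_1,\dots,x_n]$ such that $e^{tA}$ is well-defined for all $t\in\mathbb{R}$. *)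

theory Defs
  imports "HOL-Analysis.Analysis" "HOL-Library.Poly_Mapping"
begin

text \<open>The polynomial ring in n variables is the subset Pn n of polynomials only
  involving the variables with index < n.\<close>

type_synonym 'a mpoly = "(nat \<Rightarrow>\<^sub>0 nat) \<Rightarrow>\<^sub>0 'a"

definition mdeg :: "(nat \<Rightarrow>\<^sub>0 nat) \<Rightarrow> nat" where
  "mdeg m = sum (Poly_Mapping.lookup m) (Poly_Mapping.keys m)"

definition Pn :: "nat \<Rightarrow> ('a::zero) mpoly set" where
  "Pn n = {p. \<forall>m\<in>Poly_Mapping.keys p. \<forall>i\<in>Poly_Mapping.keys m. i < n}"

definition psmult :: "'a::semiring_0 \<Rightarrow> 'a mpoly \<Rightarrow> 'a mpoly" where
  "psmult c p = Poly_Mapping.map (\<lambda>x. c * x) p"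

definition poly_conv :: "(nat \<Rightarrow> real mpoly) \<Rightarrow> real mpoly \<Rightarrow> bool" where
  "poly_conv P p \<longleftrightarrow> (\<exists>D. \<forall>i. \<forall>m\<in>Poly_Mapping.keys (P i). mdeg m \<le> D)
                     \<and> (\<forall>m. (\<lambda>i. Poly_Mapping.lookup (P i) m) \<longlonglongrightarrow> Poly_Mapping.lookup p m)"

definition linear_on_Pn :: "nat \<Rightarrow> (real mpoly \<Rightarrow> real mpoly) \<Rightarrow> bool" where
  "linear_on_Pn n A \<longleftrightarrow> (\<forall>p\<in>Pn n. A p \<in> Pn n)
     \<and> (\<forall>p\<in>Pn n. \<forall>q\<in>Pn n. A (p + q) = A p + A q)
     \<and> (\<forall>c. \<forall>p\<in>Pn n. A (psmult c p) = psmult c (A p))"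

definition exp_well_defined :: "nat \<Rightarrow> (real mpoly \<Rightarrow> real mpoly) \<Rightarrow> real \<Rightarrow> bool" where
  "exp_well_defined n A t \<longleftrightarrow> (\<forall>f\<in>Pn n. \<exists>g\<in>Pn n.
      poly_conv (\<lambda>N. \<Sum>k\<le>N. psmult (t ^ k / fact k) ((A ^^ k) f)) g)"

definition frakg :: "nat \<Rightarrow> (real mpoly \<Rightarrow> real mpoly) set" where
  "frakg n = {A. linear_on_Pn n A \<and> (\<forall>t. exp_well_defined n A t)}"

definition complexify :: "(real mpoly \<Rightarrow> real mpoly) \<Rightarrow> complex mpoly \<Rightarrow> complex mpoly" where
  "complexify A p =
     Poly_Mapping.map complex_of_real (A (Poly_Mapping.map Re p))
   + psmult \<i> (Poly_Mapping.map complex_of_real (A (Poly_Mapping.map Im p)))"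

end

theory Submission imports Defs "HOL-Computational_Algebra.Fundamental_Theorem_Algebra" begin

lemma lookup_psmult[simp]: "Poly_Mapping.lookup (psmult c p) m = c * Poly_Mapping.lookup p m"
  by (simp add: psmult_def map.rep_eq when_def)

lemma lookup_map0: "f 0 = 0 \<Longrightarrow> Poly_Mapping.lookup (Poly_Mapping.map f p) m = f (Poly_Mapping.lookup p m)"
  by (simp add: map.rep_eq when_def)

interpretation pv: vector_space "psmult :: real \<Rightarrow> real mpoly \<Rightarrow> real mpoly"
  by unfold_locales (auto intro!: poly_mapping_eqI simp: lookup_add algebra_simps)

lemma Pn_iff: "p \<in> Pn n \<longleftrightarrow> (\<forall>m. Poly_Mapping.lookup p m \<noteq> 0 \<longrightarrow> (\<forall>i\<in>Poly_Mapping.keys m. i < n))"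
  by (auto simp: Pn_def in_keys_iff)

lemma Pn_add: "p \<in> Pn n \<Longrightarrow> q \<in> Pn n \<Longrightarrow> p + q \<in> Pn n"
  unfolding Pn_iff lookup_add by (metis add.left_neutral add.right_neutral)

lemma Pn_zero: "0 \<in> Pn n"
  by (simp add: Pn_iff)

lemma Pn_smult: "p \<in> Pn n \<Longrightarrow> psmult c (p::real mpoly) \<in> Pn n"
  by (auto simp: Pn_iff)

lemma Pn_sum: "(\<And>i. i \<in> I \<Longrightarrow> f i \<in> Pn n) \<Longrightarrow> sum f I \<in> Pn n"
  by (induction I rule: infinite_finite_induct) (auto simp: Pn_zero Pn_add)

definition good :: "nat \<Rightarrow> (nat \<Rightarrow>\<^sub>0 nat) \<Rightarrow> bool" where
  "good n m \<longleftrightarrow> (\<forall>i\<in>Poly_Mapping.keys m. i < n)"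

definition Pr :: "nat \<Rightarrow> real mpoly \<Rightarrow> real mpoly" where
  "Pr n p = Poly_Mapping.mapp (\<lambda>m c. if good n m then c else 0) p"

lemma lookup_Pr: "Poly_Mapping.lookup (Pr n p) m = (if good n m then Poly_Mapping.lookup p m else 0)"
  by (auto simp: Pr_def lookup_mapp when_def in_keys_iff)

lemma Pr_Pn: "Pr n p \<in> Pn n"
  by (auto simp: Pn_iff lookup_Pr good_def split: if_splits)

lemma Pr_id: "p \<in> Pn n \<Longrightarrow> Pr n p = p"
  by (rule poly_mapping_eqI) (auto simp: Pn_iff lookup_Pr good_def)

lemma Pr_add: "Pr n (p + q) = Pr n p + Pr n q"
  by (rule poly_mapping_eqI) (auto simp: lookup_Pr lookup_add)

lemma Pr_smult: "Pr n (psmult c p) = psmult c (Pr n p)"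
  by (rule poly_mapping_eqI) (auto simp: lookup_Pr)

definition lin :: "(real mpoly \<Rightarrow> real mpoly) \<Rightarrow> bool" where
  "lin T \<longleftrightarrow> (\<forall>x y. T (x + y) = T x + T y) \<and> (\<forall>c x. T (psmult c x) = psmult c (T x))"

lemma lin_add: "lin T \<Longrightarrow> T (x + y) = T x + T y" by (simp add: lin_def)
lemma lin_smult: "lin T \<Longrightarrow> T (psmult c x) = psmult c (T x)" by (simp add: lin_def)
lemma lin_zero: "lin T \<Longrightarrow> T 0 = 0"
  using lin_smult[of T 0 0] by (simp add: pv.scale_zero_left)
lemma lin_diff: "lin T \<Longrightarrow> T (x - y) = T x - T y"
  using lin_add[of T "x - y" y] by (simp add: algebra_simps)
lemma lin_sum: "lin T \<Longrightarrow> T (sum f I) = (\<Sum>i\<in>I. T (f i))"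
  by (induction I rule: infinite_finite_induct) (auto simp: lin_zero lin_add)

lemma lin_restr:
  assumes "linear_on_Pn n A" shows "lin (A \<circ> Pr n)"
  using assms unfolding lin_def linear_on_Pn_def
  by (auto simp: Pr_add Pr_smult Pr_Pn)

definition opoly :: "(real mpoly \<Rightarrow> real mpoly) \<Rightarrow> real poly \<Rightarrow> real mpoly \<Rightarrow> real mpoly" where
  "opoly T p g = (\<Sum>i\<le>degree p. psmult (coeff p i) ((T ^^ i) g))"

lemma opoly_bound: "degree p \<le> N \<Longrightarrow> opoly T p g = (\<Sum>i\<le>N. psmult (coeff p i) ((T ^^ i) g))"
  unfolding opoly_def
  by (rule sum.mono_neutral_left) (auto simp: coeff_eq_0 pv.scale_zero_left)

lemma opoly_0[simp]: "opoly T 0 g = 0"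
  by (simp add: opoly_def pv.scale_zero_left)

lemma opoly_pCons: assumes "lin T" shows "opoly T (pCons a p) g = psmult a g + T (opoly T p g)"
proof -
  have "opoly T (pCons a p) g = (\<Sum>i\<le>Suc (degree p). psmult (coeff (pCons a p) i) ((T ^^ i) g))"
    by (rule opoly_bound) (simp add: degree_pCons_le)
  also have "\<dots> = psmult a g + (\<Sum>i\<le>degree p. psmult (coeff p i) ((T ^^ Suc i) g))"
    by (subst sum.atMost_Suc_shift) simp
  also have "\<dots> = psmult a g + T (opoly T p g)"
    by (simp add: opoly_def lin_sum[OF assms] lin_smult[OF assms])
  finally show ?thesis .
qed

lemma opoly_add: "opoly T (p + q) g = opoly T p g + opoly T q g"
proof -
  let ?N = "max (degree p) (degree q)"
  have "opoly T (p + q) g = (\<Sum>i\<le>?N. psmult (coeff (p+q) i) ((T ^^ i) g))"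
    by (rule opoly_bound) (simp add: degree_add_le)
  also have "\<dots> = (\<Sum>i\<le>?N. psmult (coeff p i) ((T ^^ i) g)) + (\<Sum>i\<le>?N. psmult (coeff q i) ((T ^^ i) g))"
    by (simp add: pv.scale_left_distrib sum.distrib)
  also have "\<dots> = opoly T p g + opoly T q g"
    by (simp add: opoly_bound[of p "max (degree p) (degree q)"] opoly_bound[of q "max (degree p) (degree q)"])
  finally show ?thesis .
qed

lemma opoly_smult: "opoly T (smult c p) g = psmult c (opoly T p g)"
proof -
  have "opoly T (smult c p) g = (\<Sum>i\<le>degree p. psmult (coeff (smult c p) i) ((T ^^ i) g))"
    by (rule opoly_bound) simp
  then show ?thesis by (simp add: opoly_def pv.scale_sum_right pv.scale_scale)
qed

lemma opoly_mult: assumes "lin T" shows "opoly T (p * q) g = opoly T p (opoly T q g)"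
proof (induction p rule: pCons_induct)
  case 0 then show ?case by simp
next
  case (pCons a p)
  have "opoly T (pCons a p * q) g = psmult a (opoly T q g) + opoly T (pCons 0 (p * q)) g"
    by (simp add: opoly_add opoly_smult)
  also have "\<dots> = psmult a (opoly T q g) + T (opoly T p (opoly T q g))"
    by (simp add: opoly_pCons[OF assms] pCons.IH pv.scale_zero_left)
  also have "\<dots> = opoly T (pCons a p) (opoly T q g)"
    by (simp add: opoly_pCons[OF assms])
  finally show ?case .
qed

lemma funpow_Pn: "(\<And>x. (T::real mpoly \<Rightarrow> real mpoly) x \<in> Pn n) \<Longrightarrow> g \<in> Pn n \<Longrightarrow> (T ^^ i) g \<in> Pn n"
  by (induction i) simp_all

lemma opoly_Pn: "(\<And>x. T x \<in> Pn n) \<Longrightarrow> g \<in> Pn n \<Longrightarrow> opoly T p g \<in> Pn n"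
  unfolding opoly_def by (intro Pn_sum Pn_smult funpow_Pn)


lemma finite_K: "finite {m::nat \<Rightarrow>\<^sub>0 nat. mdeg m \<le> D \<and> good n m}"
proof -
  let ?F = "{f::nat\<Rightarrow>nat. \<forall>x. (x \<in> {..<n} \<longrightarrow> f x \<in> {..D}) \<and> (x \<notin> {..<n} \<longrightarrow> f x = 0)}"
  have fin: "finite ?F" by (rule finite_set_of_finite_funs) auto
  have inj: "inj (Poly_Mapping.lookup :: (nat \<Rightarrow>\<^sub>0 nat) \<Rightarrow> nat \<Rightarrow> nat)"
    by (rule injI) (simp add: poly_mapping_eqI)
  have sub: "{m::nat \<Rightarrow>\<^sub>0 nat. mdeg m \<le> D \<and> good n m} \<subseteq> Poly_Mapping.lookup -` ?F"
  proof
    fix m :: "nat \<Rightarrow>\<^sub>0 nat" assume m: "m \<in> {m. mdeg m \<le> D \<and> good n m}"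
    have "Poly_Mapping.lookup m x \<le> D" for x
    proof (cases "x \<in> Poly_Mapping.keys m")
      case True
      then have "Poly_Mapping.lookup m x \<le> mdeg m"
        unfolding mdeg_def by (intro member_le_sum) auto
      with m show ?thesis by auto
    next
      case False then show ?thesis by (simp add: in_keys_iff)
    qed
    moreover have "x \<notin> {..<n} \<Longrightarrow> Poly_Mapping.lookup m x = 0" for x
      using m by (auto simp: good_def in_keys_iff)
    ultimately show "m \<in> Poly_Mapping.lookup -` ?F" by auto
  qed
  show ?thesis by (rule finite_subset[OF sub finite_vimageI[OF fin inj]])
qed

lemma in_span_K:
  assumes "finite K" "Poly_Mapping.keys (p::real mpoly) \<subseteq> K"
  shows "p \<in> pv.span ((\<lambda>m. Poly_Mapping.single m 1) ` K)"
proof -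
  have "p = (\<Sum>m\<in>K. psmult (Poly_Mapping.lookup p m) (Poly_Mapping.single m 1))"
  proof (rule poly_mapping_eqI)
    fix k
    show "Poly_Mapping.lookup p k = Poly_Mapping.lookup (\<Sum>m\<in>K. psmult (Poly_Mapping.lookup p m) (Poly_Mapping.single m 1)) k"
    proof -
      have "Poly_Mapping.lookup (\<Sum>m\<in>K. psmult (Poly_Mapping.lookup p m) (Poly_Mapping.single m 1)) k
         = (\<Sum>m\<in>K. if m = k then Poly_Mapping.lookup p m else 0)"
        by (auto simp: lookup_sum lookup_single when_def intro!: sum.cong)
      also have "\<dots> = Poly_Mapping.lookup p k"
        using assms by (auto simp: sum.delta' in_keys_iff)
      finally show ?thesis by simp
    qed
  qed
  also have "\<dots> \<in> pv.span ((\<lambda>m. Poly_Mapping.single m 1) ` K)"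
    by (intro pv.span_sum pv.span_scale pv.span_base) auto
  finally show ?thesis .
qed

lemma dep_exists:
  fixes g :: "nat \<Rightarrow> real mpoly"
  assumes "finite B" "\<And>j. g j \<in> pv.span B"
  shows "\<exists>k. g k \<in> pv.span (g ` {..<k})"
proof (rule ccontr)
  assume "\<not> ?thesis"
  then have ns: "g k \<notin> pv.span (g ` {..<k})" for k by blast
  have "pv.independent (g ` {..<k}) \<and> card (g ` {..<k}) = k" for k
  proof (induction k)
    case 0 then show ?case by (simp add: pv.independent_empty)
  next
    case (Suc k)
    have ni: "g k \<notin> g ` {..<k}" using ns[of k] pv.span_base[of "g k" "g ` {..<k}"] by blast
    have "g ` {..<Suc k} = insert (g k) (g ` {..<k})" by (simp add: lessThan_Suc)
    then show ?case using Suc ni ns[of k] by (simp add: pv.independent_insert card_insert_disjoint)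
  qed
  then have "pv.independent (g ` {..<Suc (card B)})" "card (g ` {..<Suc (card B)}) = Suc (card B)"
    by auto
  moreover have "g ` {..<Suc (card B)} \<subseteq> pv.span B" using assms(2) by auto
  ultimately show False using pv.independent_span_bound[OF assms(1)] by fastforce
qed

lemma span_coeffs:
  fixes g :: "nat \<Rightarrow> real mpoly"
  shows "x \<in> pv.span (g ` {..<k}) \<Longrightarrow> \<exists>c. x = (\<Sum>j<k. psmult (c j) (g j))"
proof (induction k arbitrary: x)
  case 0 then show ?case by (simp add: pv.span_empty)
next
  case (Suc k)
  have "g ` {..<Suc k} = insert (g k) (g ` {..<k})" by (simp add: lessThan_Suc)
  with Suc.prems obtain a where "x - psmult a (g k) \<in> pv.span (g ` {..<k})"
    by (auto simp: pv.span_insert)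
  from Suc.IH[OF this] obtain c where c: "x - psmult a (g k) = (\<Sum>j<k. psmult (c j) (g j))" by blast
  have "(\<Sum>j<Suc k. psmult ((c(k:=a)) j) (g j)) = (\<Sum>j<k. psmult (c j) (g j)) + psmult a (g k)"
    by (simp add: sum.lessThan_Suc)
  also have "\<dots> = x" by (simp add: c[symmetric])
  finally show ?case by (intro exI[of _ "c(k:=a)"]) (rule sym)
qed

lemma opoly_monom: "opoly T (monom a j) g = psmult a ((T ^^ j) g)"
proof -
  have "opoly T (monom a j) g = (\<Sum>i\<le>j. psmult (coeff (monom a j) i) ((T ^^ i) g))"
    by (rule opoly_bound) (simp add: degree_monom_le)
  also have "\<dots> = psmult a ((T ^^ j) g)"
  proof -
    have "(\<Sum>i\<le>j. psmult (coeff (monom a j) i) ((T ^^ i) g)) = (\<Sum>i\<le>j. if i = j then psmult a ((T ^^ i) g) else 0)"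
      by (rule sum.cong) (auto simp: coeff_monom pv.scale_zero_left)
    then show ?thesis by simp
  qed
  finally show ?thesis .
qed

lemma opoly_diff: "opoly T (p - q) g = opoly T p g - opoly T q g"
  using opoly_add[of T "p - q" q g] by simp

lemma opoly_sum: "opoly T (sum f I) g = (\<Sum>i\<in>I. opoly T (f i) g)"
  by (induction I rule: infinite_finite_induct) (auto simp: opoly_add)


abbreviation cp :: "real poly \<Rightarrow> complex poly" where "cp \<equiv> map_poly of_real"

lemma cp_add: "cp (p + q) = cp p + cp q"
  by (rule poly_eqI) (simp add: coeff_map_poly)

lemma cp_mult: "cp (p * q) = cp p * cp q"
  by (rule poly_eqI) (simp add: coeff_map_poly coeff_mult)

lemma cp_real: "poly (cp p) (of_real x) = of_real (poly p x)"
  by (induction p) (auto simp: map_poly_pCons)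

lemma cp_degree: "degree (cp p) = degree p"
  by (rule degree_map_poly) simp

lemma Pn_diff: "p \<in> Pn n \<Longrightarrow> q \<in> Pn n \<Longrightarrow> (p::real mpoly) - q \<in> Pn n"
  unfolding Pn_iff lookup_minus by (metis diff_zero diff_self)

lemma opoly_const: "lin T \<Longrightarrow> opoly T [:c:] g = psmult c g"
  by (simp add: opoly_pCons lin_zero)

lemma eig:
  fixes T :: "real mpoly \<Rightarrow> real mpoly"
  assumes lin: "lin T" and TP: "\<And>x. T x \<in> Pn n" and gP: "g \<in> Pn n" and g0: "g \<noteq> 0"
  shows "q \<noteq> 0 \<Longrightarrow> opoly T q g = 0 \<Longrightarrow> \<exists>u v a b. u \<in> Pn n \<and> v \<in> Pn n \<and> u \<noteq> 0 \<and>
            T u = psmult a u - psmult b v \<and> T v = psmult b u + psmult a v"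
proof (induction "degree q" arbitrary: q rule: less_induct)
  case less
  show ?case
  proof (cases "degree q = 0")
    case True
    then obtain c where qc: "q = [:c:]" by (rule degree_eq_zeroE)
    with less.prems have "c \<noteq> 0" by auto
    moreover have "psmult c g = 0" using less.prems qc by (simp add: opoly_const[OF lin])
    ultimately show ?thesis using g0 by (simp add: pv.scale_eq_0_iff)
  next
    case False
    have uP: "opoly T h g \<in> Pn n" for h by (rule opoly_Pn[OF TP gP])
    obtain z :: complex where z: "poly (cp q) z = 0"
      using alg_closed_imp_poly_has_root[of "cp q"] False by (auto simp: cp_degree)
    show ?thesis
    proof (cases "Im z = 0")
      case True
      define a where "a = Re z"
      have "z = of_real a" using True by (simp add: a_def complex_eq_iff)
      with z have "poly q a = 0" by (simp add: cp_real)
      then have "[:- a, 1:] dvd q" by (simp add: dvd_iff_poly_eq_0)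
      then obtain h where qh: "q = [:- a, 1:] * h" by (rule dvdE)
      with less.prems have h0: "h \<noteq> 0" by auto
      have "degree q = degree [:- a, 1:] + degree h"
        unfolding qh by (rule degree_mult_eq) (use h0 in auto)
      then have dh: "degree h < degree q" by simp
      define u where "u = opoly T h g"
      have "0 = opoly T ([:- a, 1:] * h) g" using less.prems(2) by (simp only: qh)
      also have "\<dots> = opoly T [:- a, 1:] u" by (simp only: opoly_mult[OF lin] u_def)
      also have "\<dots> = psmult (-a) u + T u" by (simp add: opoly_pCons[OF lin] lin_zero[OF lin])
      finally have eqTu: "psmult (-a) u + T u = 0" by simp
      have Tu: "T u = psmult a u"
      proof (rule poly_mapping_eqI)
        fix m
        have "Poly_Mapping.lookup (psmult (-a) u + T u) m = 0" using eqTu by simp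
        then show "Poly_Mapping.lookup (T u) m = Poly_Mapping.lookup (psmult a u) m" by (simp add: lookup_add lookup_minus)
      qed
      show ?thesis
      proof (cases "u = 0")
        case True
        then show ?thesis using less.hyps[OF dh h0] by (simp add: u_def)
      next
        case False
        have "u \<in> Pn n \<and> 0 \<in> Pn n \<and> u \<noteq> 0 \<and> T u = psmult a u - psmult 0 0 \<and> T 0 = psmult 0 u + psmult a 0"
          using False Tu uP[of h] Pn_zero lin_zero[OF lin] by (simp add: u_def pv.scale_zero_left pv.scale_zero_right)
        then show ?thesis by blast
      qed
    next
      case False
      define a where "a = Re z"
      define b where "b = Im z"
      have b0: "b \<noteq> 0" using False by (simp add: b_def)
      define r where "r = [:a^2 + b^2, -2*a, 1:]"
      have r0: "r \<noteq> 0" by (simp add: r_def)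
      have rz: "poly (cp r) z = 0"
      proof -
        have zz: "z = Complex a b" by (simp add: a_def b_def)
        show ?thesis unfolding r_def zz by (simp add: map_poly_pCons complex_eq_iff power2_eq_square algebra_simps)
      qed
      define s where "s = q mod r"
      have qdec: "q = q div r * r + s" by (simp add: s_def)
      have sz: "poly (cp s) z = 0"
      proof -
        have "poly (cp q) z = poly (cp (q div r)) z * poly (cp r) z + poly (cp s) z"
          by (subst qdec) (simp add: cp_add cp_mult)
        with z rz show ?thesis by simp
      qed
      have s0: "s = 0"
      proof (rule ccontr)
        assume sn: "s \<noteq> 0"
        have "degree s < 2" using degree_mod_less[OF r0, of q] sn by (simp add: s_def r_def)
        then have seq: "s = [:coeff s 0, coeff s 1:]"
        proof (intro poly_eqI)
          fix i assume ds: "degree s < 2"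
          show "coeff s i = coeff [:coeff s 0, coeff s 1:] i"
          proof (cases "i < 2")
            case True then have "i = 0 \<or> i = 1" by auto
            then show ?thesis by auto
          next
            case False
            then have "coeff s i = 0" using ds by (intro coeff_eq_0) simp
            moreover obtain j where "i = Suc (Suc j)" using False by (metis add_2_eq_Suc le_add_diff_inverse not_less)
            ultimately show ?thesis by simp
          qed
        qed
        have "poly (cp [:coeff s 0, coeff s 1:]) z = 0" using sz seq by simp
        then have e: "of_real (coeff s 0) + z * of_real (coeff s 1) = 0" by (simp add: map_poly_pCons)
        then have "Im z * coeff s 1 = 0" by (simp add: complex_eq_iff)
        with False have c1: "coeff s 1 = 0" by simp
        with e have "coeff s 0 = 0" by simp
        with c1 seq sn show False by simp
      qed
      define h where "h = q div r"
      have qh: "q = r * h" using qdec s0 by (simp add: h_def mult.commute)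
      with less.prems have h0: "h \<noteq> 0" by auto
      have "degree q = degree r + degree h"
        unfolding qh by (rule degree_mult_eq) (use h0 r0 in auto)
      then have dh: "degree h < degree q" by (simp add: r_def)
      define u where "u = opoly T h g"
      have "0 = opoly T (r * h) g" using less.prems(2) by (simp only: qh)
      also have "\<dots> = opoly T r u" by (simp only: opoly_mult[OF lin] u_def)
      also have "\<dots> = psmult (a^2+b^2) u + psmult (-2*a) (T u) + T (T u)"
        by (simp add: r_def opoly_pCons[OF lin] lin_zero[OF lin] lin_add[OF lin] lin_smult[OF lin] lin_diff[OF lin] add.assoc)
      finally have eqTTu: "psmult (a^2+b^2) u + psmult (-2*a) (T u) + T (T u) = 0" by simp
      have TTu: "Poly_Mapping.lookup (T (T u)) m = 2*a * Poly_Mapping.lookup (T u) m - (a^2+b^2) * Poly_Mapping.lookup u m" for m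
      proof -
        have "Poly_Mapping.lookup (psmult (a^2+b^2) u + psmult (-2*a) (T u) + T (T u)) m = 0" using eqTTu by simp
        then show ?thesis by (simp add: lookup_add lookup_minus)
      qed
      show ?thesis
      proof (cases "u = 0")
        case True
        then show ?thesis using less.hyps[OF dh h0] by (simp add: u_def)
      next
        case False
        define v where "v = psmult (1/b) (psmult a u - T u)"
        have vP: "v \<in> Pn n" unfolding v_def u_def by (intro Pn_smult Pn_diff uP TP)
        have Tv: "T v = psmult (1/b) (psmult a (T u) - T (T u))"
          by (simp add: v_def lin_smult[OF lin] lin_diff[OF lin])
        have e1: "T u = psmult a u - psmult b v"
          by (rule poly_mapping_eqI) (simp add: v_def lookup_minus b0)
        have e2: "T v = psmult b u + psmult a v"
        proof (rule poly_mapping_eqI)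
          fix m
          let ?u = "Poly_Mapping.lookup u m" and ?t = "Poly_Mapping.lookup (T u) m"
          have "Poly_Mapping.lookup (T v) m = (1/b) * (a * ?t - (2*a*?t - (a^2+b^2) * ?u))"
            by (simp add: Tv lookup_minus TTu)
          also have "\<dots> = b * ?u + a * ((1/b) * (a * ?u - ?t))"
            using b0 by (simp add: field_simps power2_eq_square)
          also have "\<dots> = Poly_Mapping.lookup (psmult b u + psmult a v) m"
            by (simp add: v_def lookup_add lookup_minus)
          finally show "Poly_Mapping.lookup (T v) m = Poly_Mapping.lookup (psmult b u + psmult a v) m" .
        qed
        show ?thesis using e1 e2 False vP uP[of h] u_def by blast
      qed
    qed
  qed
qed


lemma eigen_to_complex:
  assumes uP: "u \<in> Pn n" and vP: "v \<in> Pn n" and u0: "u \<noteq> 0"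
    and e1: "A u = psmult a u - psmult b v" and e2: "A v = psmult b u + psmult a v"
  shows "\<exists>(c::complex) (p::complex mpoly). p \<in> Pn n \<and> p \<noteq> 0 \<and> complexify A p = psmult c p"
proof -
  define f where "f = (\<lambda>m. Complex (Poly_Mapping.lookup u m) (Poly_Mapping.lookup v m))"
  have fin: "finite {m. f m \<noteq> 0}"
  proof (rule finite_subset)
    show "{m. f m \<noteq> 0} \<subseteq> Poly_Mapping.keys u \<union> Poly_Mapping.keys v"
      by (auto simp: f_def in_keys_iff complex_eq_iff)
  qed auto
  define p where "p = Abs_poly_mapping f"
  have lp: "Poly_Mapping.lookup p m = f m" for m using fin by (simp add: p_def)
  have Rp: "Poly_Mapping.map Re p = u"
    by (rule poly_mapping_eqI) (simp add: lookup_map0 lp f_def)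
  have Ip: "Poly_Mapping.map Im p = v"
    by (rule poly_mapping_eqI) (simp add: lookup_map0 lp f_def)
  have "complexify A p = psmult (Complex a b) p"
  proof (rule poly_mapping_eqI)
    fix m
    show "Poly_Mapping.lookup (complexify A p) m = Poly_Mapping.lookup (psmult (Complex a b) p) m"
      by (simp add: complexify_def Rp Ip e1 e2 lookup_add lookup_minus lookup_map0 lp f_def complex_eq_iff)
  qed
  moreover have "p \<in> Pn n"
    using uP vP unfolding Pn_iff by (auto simp: lp f_def complex_eq_iff)
  moreover have "p \<noteq> 0"
  proof
    assume "p = 0"
    then have "Poly_Mapping.lookup u m = 0" for m using lp[of m] by (simp add: f_def complex_eq_iff)
    then show False using u0 by (metis poly_mapping_eqI lookup_zero)
  qed
  ultimately show ?thesis by blast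
qed

theorem mainTheorem1:
  fixes n :: nat and A :: "real mpoly \<Rightarrow> real mpoly"
  assumes "A \<in> frakg n"
  shows "\<exists>(c::complex) (p::complex mpoly). p \<in> Pn n \<and> p \<noteq> 0 \<and> complexify A p = psmult c p"
proof -
  have lA: "linear_on_Pn n A" and ex: "exp_well_defined n A 1" using assms by (auto simp: frakg_def)
  define T where "T = A \<circ> Pr n"
  have lin: "lin T" unfolding T_def by (rule lin_restr[OF lA])
  have AP: "\<And>x. x \<in> Pn n \<Longrightarrow> A x \<in> Pn n" using lA by (simp add: linear_on_Pn_def)
  have TP: "\<And>x. T x \<in> Pn n" by (simp add: T_def AP Pr_Pn)
  have TA: "\<And>x. x \<in> Pn n \<Longrightarrow> T x = A x" by (simp add: T_def Pr_id)
  define one :: "real mpoly" where "one = Poly_Mapping.single 0 1"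
  have oneP: "one \<in> Pn n" by (simp add: one_def Pn_def)
  have one0: "one \<noteq> 0" by (simp add: one_def)
  have AkP: "(A ^^ k) one \<in> Pn n" for k by (induction k) (simp_all add: oneP AP)
  have TkA: "(T ^^ k) one = (A ^^ k) one" for k by (induction k) (simp_all add: TA AkP)
  from ex oneP obtain g' where "poly_conv (\<lambda>N. \<Sum>k\<le>N. psmult (1 ^ k / fact k) ((A ^^ k) one)) g'"
    unfolding exp_well_defined_def by blast
  then obtain D where D: "\<And>N m. m \<in> Poly_Mapping.keys (\<Sum>k\<le>N. psmult (1 ^ k / fact k) ((A ^^ k) one)) \<Longrightarrow> mdeg m \<le> D"
    unfolding poly_conv_def by blast
  define S where "S = (\<lambda>N. \<Sum>k\<le>N. psmult (1 ^ k / fact k) ((A ^^ k) one))"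
  have Sdeg: "Poly_Mapping.lookup (S N) m \<noteq> 0 \<Longrightarrow> mdeg m \<le> D" for N m
    using D[of m N] by (simp add: S_def in_keys_iff)
  have deg: "mdeg m \<le> D" if "Poly_Mapping.lookup ((A ^^ k) one) m \<noteq> 0" for k m
  proof (cases k)
    case 0
    have "Poly_Mapping.lookup (S 0) m = Poly_Mapping.lookup ((A ^^ k) one) m" by (simp add: S_def 0)
    with that Sdeg[of 0 m] show ?thesis by simp
  next
    case (Suc j)
    have "Poly_Mapping.lookup (S k) m = Poly_Mapping.lookup (S j) m + (1 / fact k) * Poly_Mapping.lookup ((A ^^ k) one) m"
      by (simp add: S_def Suc lookup_add)
    moreover have "(1 / fact k) * Poly_Mapping.lookup ((A ^^ k) one) m \<noteq> (0::real)" using that by simp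
    ultimately have "Poly_Mapping.lookup (S k) m \<noteq> 0 \<or> Poly_Mapping.lookup (S j) m \<noteq> 0" by auto
    then show ?thesis using Sdeg by blast
  qed
  define K where "K = {m::nat \<Rightarrow>\<^sub>0 nat. mdeg m \<le> D \<and> good n m}"
  have finK: "finite K" unfolding K_def by (rule finite_K)
  define g where "g = (\<lambda>k. (T ^^ k) one)"
  have gK: "Poly_Mapping.keys (g k) \<subseteq> K" for k
  proof
    fix m assume m: "m \<in> Poly_Mapping.keys (g k)"
    then have "Poly_Mapping.lookup ((A ^^ k) one) m \<noteq> 0" by (simp add: g_def TkA in_keys_iff)
    moreover have "good n m" using AkP[of k] m by (auto simp: g_def TkA Pn_def good_def)
    ultimately show "m \<in> K" using deg by (auto simp: K_def)
  qed
  have gs: "\<And>j. g j \<in> pv.span ((\<lambda>m. Poly_Mapping.single m 1) ` K)"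
    by (rule in_span_K[OF finK gK])
  from dep_exists[where g=g, OF finite_imageI[OF finK] gs] obtain k where "g k \<in> pv.span (g ` {..<k})" by blast
  from span_coeffs[OF this] obtain c where c: "g k = (\<Sum>j<k. psmult (c j) (g j))" by blast
  define q where "q = monom 1 k - (\<Sum>j<k. monom (c j) j)"
  have "coeff q k = 1"
    by (simp add: q_def coeff_diff coeff_sum coeff_monom)
  then have q0: "q \<noteq> 0" by auto
  have "opoly T q one = g k - (\<Sum>j<k. psmult (c j) (g j))"
    by (simp add: q_def opoly_diff opoly_sum opoly_monom g_def pv.scale_one)
  then have "opoly T q one = 0" using c by simp
  from eig[OF lin TP oneP one0 q0 this] obtain u v a b where
    uv: "u \<in> Pn n" "v \<in> Pn n" "u \<noteq> 0" "T u = psmult a u - psmult b v" "T v = psmult b u + psmult a v"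
    by blast
  show ?thesis
    by (rule eigen_to_complex[OF uv(1,2,3)]) (use uv TA in auto)
qed

end
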